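(* Let $\theta$ be a random variable with a continuous distribution, let $u(q,\theta)$ be strictly concave and monotone increasing in $q$ for every $\theta$, with marginal utility $\mu(q,\theta)=\partial u(q,\theta)/\partial q$ (so $\mu>0$ and $\partial\mu/\partial q<0$). Let $\pi_0>0$, $\pi_2>0$, and let $\phi:\mathbb{R}\to\mathbb{R}$ be a penalty function with $\phi(0)=\phi'(0)=0$, $\phi(x)=\phi(-x)$ for all $x$, and $\phi''(x)>0$ for all $x$. For a baseline report $f\in\mathbb{R}$ define $q^a(\theta)=\arg\min_q\{\pi_0 q-u(q,\theta)\}$, $q^b(f,\theta)=\arg\min_q\{\pi_0 q-u(q,\theta)+\phi(f-q)\}$, $q^c(\theta)=\arg\min_q\{\pi_0 q-u(q,\theta)-\pi_2(f-q)\}$. Then for every $\theta$: (i) $q^c(\theta)<q^a(\theta)$, and (ii) either $q^a(\theta)<q^b(f,\theta)<f$ or $f<q^b(f,\theta)<q^a(\theta)$.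
   Context: $q^a$ is the consumption of a consumer not participating in the demand response program, $q^b$ the consumption of a participating consumer who is not called (and is penalized by $\phi$ for deviating from its reported baseline $f$), and $q^c$ the consumption of a participating consumer who is called and rewarded $\pi_2$ per unit reduction below $f$. The minimizers are characterized by the first-order conditions $\pi_0=\mu(q^a,\theta)$, $\pi_0-\mu(q^b,\theta)-\phi'(f-q^b)=0$, and $\pi_0+\pi_2=\mu(q^c,\theta)$. *)

theory Defs
  imports Complex_Main
begin

end

theory Submission
  imports Defs
begin

theorem lemma1:
  fixes u mu dmu :: "real \<Rightarrow> 'a \<Rightarrow> real"
    and phi phi' phi'' :: "real \<Rightarrow> real"
    and pi0 pi2 f :: real
    and qa qb qc :: "'a \<Rightarrow> real"
  assumes u_deriv: "\<And>\<theta> q. ((\<lambda>q. u q \<theta>) has_real_derivative mu q \<theta>) (at q)"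
    and mu_pos: "\<And>\<theta> q. mu q \<theta> > 0"
    and mu_deriv: "\<And>\<theta> q. ((\<lambda>q. mu q \<theta>) has_real_derivative dmu q \<theta>) (at q)"
    and dmu_neg: "\<And>\<theta> q. dmu q \<theta> < 0"
    and pi0_pos: "pi0 > 0" and pi2_pos: "pi2 > 0"
    and phi_deriv: "\<And>x. (phi has_real_derivative phi' x) (at x)"
    and phi'_deriv: "\<And>x. (phi' has_real_derivative phi'' x) (at x)"
    and phi''_pos: "\<And>x. phi'' x > 0"
    and phi0: "phi 0 = 0" and phi'0: "phi' 0 = 0"
    and phi_even: "\<And>x. phi x = phi (- x)"
    and qa_min: "\<And>\<theta>. is_arg_min (\<lambda>q. pi0 * q - u q \<theta>) (\<lambda>_. True) (qa \<theta>)"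
    and qb_min: "\<And>\<theta>. is_arg_min (\<lambda>q. pi0 * q - u q \<theta> + phi (f - q)) (\<lambda>_. True) (qb \<theta>)"
    and qc_min: "\<And>\<theta>. is_arg_min (\<lambda>q. pi0 * q - u q \<theta> - pi2 * (f - q)) (\<lambda>_. True) (qc \<theta>)"
  shows "\<forall>\<theta>. qc \<theta> < qa \<theta> \<and>
           (f \<noteq> qa \<theta> \<longrightarrow> ((qa \<theta> < qb \<theta> \<and> qb \<theta> < f) \<or> (f < qb \<theta> \<and> qb \<theta> < qa \<theta>)))"
proof (intro allI)
  fix th
  have mudec: "\<And>x y. x < y \<Longrightarrow> mu y th < mu x th"
    using DERIV_neg_imp_decreasing[where f="\<lambda>q. mu q th"] mu_deriv dmu_neg by blast
  have phiinc: "\<And>x y. x < y \<Longrightarrow> phi' x < phi' y"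
    using DERIV_pos_imp_increasing[where f="phi'"] phi'_deriv phi''_pos by blast
  have minz: "\<And>g g' x. (g has_real_derivative g') (at x) \<Longrightarrow> (\<forall>y. g x \<le> g y) \<Longrightarrow> g' = 0"
  proof -
    fix g g' x assume "(g has_real_derivative g') (at x)" "\<forall>y. g x \<le> g (y::real)"
    then show "g' = 0" using DERIV_local_min[where f=g and x=x and l=g' and d=1] by auto
  qed
  have a1: "((\<lambda>q. pi0 * q - u q th) has_real_derivative pi0 - mu (qa th) th) (at (qa th))"
    by (auto intro!: derivative_eq_intros u_deriv)
  have fa: "pi0 - mu (qa th) th = 0"
    by (rule minz[OF a1]) (use qa_min[of th] in \<open>auto simp: is_arg_min_linorder\<close>)
  have c1: "((\<lambda>q. pi0 * q - u q th - pi2 * (f - q)) has_real_derivative pi0 - mu (qc th) th + pi2) (at (qc th))"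
    by (auto intro!: derivative_eq_intros u_deriv)
  have fc: "pi0 - mu (qc th) th + pi2 = 0"
    by (rule minz[OF c1]) (use qc_min[of th] in \<open>auto simp: is_arg_min_linorder\<close>)
  have b1: "((\<lambda>q. pi0 * q - u q th + phi (f - q)) has_real_derivative pi0 - mu (qb th) th - phi' (f - qb th)) (at (qb th))"
    by (auto intro!: derivative_eq_intros u_deriv DERIV_chain2[OF phi_deriv])
  have fb: "pi0 - mu (qb th) th - phi' (f - qb th) = 0"
    by (rule minz[OF b1]) (use qb_min[of th] in \<open>auto simp: is_arg_min_linorder\<close>)
  have "qc th < qa th"
  proof (rule ccontr)
    assume "\<not> qc th < qa th"
    then have "mu (qc th) th \<le> mu (qa th) th" using mudec[of "qa th" "qc th"]
      by (cases "qa th = qc th") auto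
    then show False using fa fc pi2_pos by linarith
  qed
  moreover have "f \<noteq> qa th \<longrightarrow> ((qa th < qb th \<and> qb th < f) \<or> (f < qb th \<and> qb th < qa th))"
  proof
    assume ne: "f \<noteq> qa th"
    consider "qb th < f" | "qb th = f" | "qb th > f" by linarith
    then show "(qa th < qb th \<and> qb th < f) \<or> (f < qb th \<and> qb th < qa th)"
    proof cases
      case 1
      have "phi' (f - qb th) > 0" using phiinc[of 0 "f - qb th"] 1 phi'0 by auto
      then have "mu (qb th) th < mu (qa th) th" using fa fb by linarith
      then have "qa th < qb th" using mudec[of "qb th" "qa th"]
        by (metis less_asym linorder_neqE_linordered_idom)
      then show ?thesis using 1 by auto
    next
      case 2
      then have "mu (qb th) th = mu (qa th) th" using fa fb phi'0 by auto
      then have "qb th = qa th" using mudec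
        by (metis less_irrefl linorder_neqE_linordered_idom)
      then show ?thesis using 2 ne by auto
    next
      case 3
      have "phi' (f - qb th) < 0" using phiinc[of "f - qb th" 0] 3 phi'0 by auto
      then have "mu (qb th) th > mu (qa th) th" using fa fb by linarith
      then have "qb th < qa th" using mudec[of "qa th" "qb th"]
        by (metis less_asym linorder_neqE_linordered_idom)
      then show ?thesis using 3 by auto
    qed
  qed
  ultimately show "qc th < qa th \<and> (f \<noteq> qa th \<longrightarrow> ((qa th < qb th \<and> qb th < f) \<or> (f < qb th \<and> qb th < qa th)))"
    by blast
qed

end
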